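(* Let $r\ge1$, $n\ge1$ and $k\ge1$ be integers, and let $\mathcal P(n,r,1)$ be the set of lattice paths with steps $U=(1,1)$ and $D=(1,-r)$ from $(0,0)$ to $((r+1)n+1,1)$ (so with $rn+1$ up steps and $n$ down steps). Then (whenever the denominators are nonzero): (1) The number of paths in $\mathcal P(n,r,1)$ with $k-1$ peaks that start with a down step and end with an up step and have exactly $j$ peaks on or below the $x$-axis is $\frac1k\binom{rn}{k-1}\binom{n-1}{k-1}$, for each $j=0,1,\dots,k-1$. (2) The number of paths in $\mathcal P(n,r,1)$ with $k-1$ valleys that start with an up step and end with a down step and have exactly $j$ valleys on or below the $x$-axis is $\frac1k\binom{rn}{k-1}\binom{n-1}{k-1}$, for each $j=0,1,\dots,k-1$. (3) The number of paths in $\mathcal P(n,r,1)$ with $rn-k$ double rises that start with an up step and end with an up step and have exactly $j$ double rises on or below the $x$-axis is $\frac{1}{rn-k+1}\binom{rn}{k}\binom{n-1}{k-1}$, for each $j=0,1,\dots,rn-k$. (4) The number of paths in $\mathcal P(n,r,1)$ with $n-k-1$ double falls that start with a down step and end with a down step and have exactly $j$ double falls on or below the $x$-axis is $\frac{1}{n-k}\binom{rn}{k-1}\binom{n-1}{k}$, for each $j=0,1,\dots,n-k-1$. (5) The number of paths in $\mathcal P(n,r,1)$ with $k$ peaks that start with an up step and have exactly $j$ up steps starting on or below the $x$-axis is $\frac{1}{rn+1}\binom{rn+1}{k}\binom{n-1}{k-1}$, for each $j=1,2,\dots,rn+1$. (6) The number of paths in $\mathcal P(n,r,1)$ with $k$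 valleys that start with a down step and have exactly $j$ down steps starting on or below the $x$-axis is $\frac1n\binom{rn}{k-1}\binom{n}{k}$, for each $j=1,2,\dots,n$.
   Context: Writing a path as a word in $U,D$: a peak is an occurrence of two consecutive steps $UD$, a valley an occurrence of $DU$, a double rise an occurrence of $UU$, a double fall an occurrence of $DD$; such an occurrence lies on or below the $x$-axis if the vertex between its two steps has $y$-coordinate $\le0$. A step starts on or below the $x$-axis if its initial vertex has $y$-coordinate $\le0$. *)

theory Defs
  imports Complex_Main
begin

datatype step = U | D

text \<open>Lattice paths with steps U=(1,1), D=(1,-r) from (0,0) to ((r+1)n+1,1),
  encoded as words in U, D.\<close>
definition paths :: "nat \<Rightarrow> nat \<Rightarrow> step list set" where
  "paths n r = {w. length w = (r+1)*n+1 \<and> count_list w U = r*n+1 \<and> count_list w D = n}"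

definition ht :: "nat \<Rightarrow> step list \<Rightarrow> nat \<Rightarrow> int" where
  "ht r w i = int (count_list (take i w) U) - int r * int (count_list (take i w) D)"

text \<open>Number of occurrences of the factor a b (peak: U D, valley: D U,
  double rise: U U, double fall: D D).\<close>
definition occ :: "step \<Rightarrow> step \<Rightarrow> step list \<Rightarrow> nat" where
  "occ a b w = card {i. Suc i < length w \<and> w ! i = a \<and> w ! Suc i = b}"

definition occ_low :: "nat \<Rightarrow> step \<Rightarrow> step \<Rightarrow> step list \<Rightarrow> nat" where
  "occ_low r a b w = card {i. Suc i < length w \<and> w ! i = a \<and> w ! Suc i = b \<and> ht r w (Suc i) \<le> 0}"

definition steps_low :: "nat \<Rightarrow> step \<Rightarrow> step list \<Rightarrow> nat" where
  "steps_low r a w = card {i. i < length w \<and> w ! i = a \<and> ht r w i \<le> 0}"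

end

theory Submission
  imports Defs
begin


lemma step_UNIV: "(UNIV :: step set) = {U, D}"
  using step.exhaust by auto

instance step :: finite
  by standard (simp add: step_UNIV)

lemma occ_Nil[simp]: "occ a b [] = 0"
  by (simp add: occ_def)

lemma occ_single[simp]: "occ a b [x] = 0"
  by (simp add: occ_def)

lemma occ_Cons2: "occ a b (x # y # w) = (if x = a \<and> y = b then 1 else 0) + occ a b (y # w)"
proof -
  let ?A = "{i. Suc i < length (y # w) \<and> (y # w) ! i = a \<and> (y # w) ! Suc i = b}"
  have eq: "{i. Suc i < length (x # y # w) \<and> (x # y # w) ! i = a \<and> (x # y # w) ! Suc i = b}
      = (if x = a \<and> y = b then {0} else {}) \<union> Suc ` ?A"
  proof (rule set_eqI)
    fix i show "i \<in> {i. Suc i < length (x # y # w) \<and> (x # y # w) ! i = a \<and> (x # y # w) ! Suc i = b}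
      \<longleftrightarrow> i \<in> (if x = a \<and> y = b then {0} else {}) \<union> Suc ` ?A"
    proof (cases i)
      case 0 then show ?thesis by auto
    next
      case (Suc j)
      have "Suc j \<in> Suc ` ?A \<longleftrightarrow> j \<in> ?A" by (rule inj_image_mem_iff) simp
      then show ?thesis using Suc by auto
    qed
  qed
  have fin: "finite ?A" by (rule finite_subset[of _ "{..<length (y#w)}"]) auto
  have "0 \<notin> Suc ` ?A" by auto
  then show ?thesis unfolding occ_def eq using fin
    by (simp add: card_image)
qed

lemma len_counts: "length w = count_list w U + count_list w D"
proof (induction w)
  case (Cons a w) then show ?case by (cases a) auto
qed simp

lemma I1: "w \<noteq> [] \<Longrightarrow> occ U U w + occ U D w + (if last w = U then 1 else 0) = count_list w U"
proof (induction w)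
  case Nil then show ?case by simp
next
  case (Cons x w)
  show ?case
  proof (cases w)
    case Nil then show ?thesis by (cases x) auto
  next
    case (Cons y v)
    with Cons.IH show ?thesis by (cases x; cases y) (auto simp: occ_Cons2)
  qed
qed

lemma I2: "w \<noteq> [] \<Longrightarrow> occ D U w + occ D D w + (if last w = D then 1 else 0) = count_list w D"
proof (induction w)
  case Nil then show ?case by simp
next
  case (Cons x w)
  show ?case
  proof (cases w)
    case Nil then show ?thesis by (cases x) auto
  next
    case (Cons y v)
    with Cons.IH show ?thesis by (cases x; cases y) (auto simp: occ_Cons2)
  qed
qed

lemma I3: "w \<noteq> [] \<Longrightarrow> occ U U w + occ D U w + (if hd w = U then 1 else 0) = count_list w U"
proof (induction w)
  case Nil then show ?case by simp
next
  case (Cons x w)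
  show ?case
  proof (cases w)
    case Nil then show ?thesis by (cases x) auto
  next
    case (Cons y v)
    with Cons.IH show ?thesis by (cases x; cases y) (auto simp: occ_Cons2)
  qed
qed

lemma UD_DU: "w \<noteq> [] \<Longrightarrow> occ U D w + (if last w = U then 1 else 0) = occ D U w + (if hd w = U then 1 else 0)"
  using I1[of w] I3[of w] by simp

fun cmp :: "nat \<Rightarrow> nat \<Rightarrow> nat" where
  "cmp 0 m = (if m = 0 then 1 else 0)"
| "cmp (Suc N) 0 = 0"
| "cmp (Suc N) (Suc m) = cmp N (Suc m) + cmp N m"

lemma comp_choose: "cmp (Suc N) (Suc m) = N choose m"
proof (induction N arbitrary: m)
  case 0 then show ?case by (cases m) auto
next
  case (Suc N)
  show ?case
  proof (cases m)
    case 0 then show ?thesis using Suc[of 0] by simp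
  next
    case (Suc m') then show ?thesis using Suc.IH[of m'] Suc.IH[of "Suc m'"] by simp
  qed
qed

lemma occ_Cons: "v \<noteq> [] \<Longrightarrow> occ a b (x # v) = (if x = a \<and> hd v = b then 1 else 0) + occ a b v"
  by (cases v) (auto simp: occ_Cons2)

definition Wset :: "step \<Rightarrow> step \<Rightarrow> nat \<Rightarrow> nat \<Rightarrow> nat \<Rightarrow> step list set" where
  "Wset x y a b p = {w. w \<noteq> [] \<and> hd w = x \<and> last w = y \<and> count_list w U = a \<and> count_list w D = b \<and> occ U D w = p}"

lemma Wset_finite: "finite (Wset x y a b p)"
proof -
  have "Wset x y a b p \<subseteq> {w. set w \<subseteq> UNIV \<and> length w = a + b}"
    unfolding Wset_def using len_counts by auto
  moreover have "finite {w::step list. set w \<subseteq> UNIV \<and> length w = a + b}"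
    by (rule finite_lists_length_eq) simp
  ultimately show ?thesis by (rule finite_subset)
qed

lemma Wset_U0: "Wset U y 0 b p = {}"
  unfolding Wset_def by (auto simp: neq_Nil_conv)

lemma Wset_D0: "Wset D y a 0 p = {}"
  unfolding Wset_def by (auto simp: neq_Nil_conv)

lemma Wset_U: "Wset U y (Suc a) b p =
   (if y = U \<and> a = 0 \<and> b = 0 \<and> p = 0 then {[U]} else {}) \<union> Cons U ` Wset U y a b p
   \<union> (if p > 0 then Cons U ` Wset D y a b (p - 1) else {})"
proof (rule set_eqI)
  fix w
  show "w \<in> Wset U y (Suc a) b p \<longleftrightarrow> w \<in> (if y = U \<and> a = 0 \<and> b = 0 \<and> p = 0 then {[U]} else {}) \<union> Cons U ` Wset U y a b p
   \<union> (if p > 0 then Cons U ` Wset D y a b (p - 1) else {})"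
  proof (cases w)
    case Nil then show ?thesis by (auto simp: Wset_def)
  next
    case (Cons x v)
    show ?thesis
    proof (cases v)
      case Nil then show ?thesis using Cons by (cases x; cases y) (auto simp: Wset_def)
    next
      case (Cons z v')
      then have v: "v \<noteq> []" by simp
      have "hd v = U \<or> hd v = D" by (cases "hd v") auto
      then show ?thesis using v \<open>w = x # v\<close> by (auto simp: Wset_def occ_Cons)
    qed
  qed
qed

lemma Wset_D: "Wset D y a (Suc b) p =
   (if y = D \<and> a = 0 \<and> b = 0 \<and> p = 0 then {[D]} else {}) \<union> Cons D ` Wset D y a b p
   \<union> Cons D ` Wset U y a b p"
proof (rule set_eqI)
  fix w
  show "w \<in> Wset D y a (Suc b) p \<longleftrightarrow> w \<in> (if y = D \<and> a = 0 \<and> b = 0 \<and> p = 0 then {[D]} else {}) \<union> Cons D ` Wset D y a b p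
   \<union> Cons D ` Wset U y a b p"
  proof (cases w)
    case Nil then show ?thesis by (auto simp: Wset_def)
  next
    case (Cons x v)
    show ?thesis
    proof (cases v)
      case Nil then show ?thesis using Cons by (cases x; cases y) (auto simp: Wset_def)
    next
      case (Cons z v')
      then have v: "v \<noteq> []" by simp
      have "hd v = U \<or> hd v = D" by (cases "hd v") auto
      then show ?thesis using v \<open>w = x # v\<close> by (auto simp: Wset_def occ_Cons)
    qed
  qed
qed


fun ru :: "step \<Rightarrow> step \<Rightarrow> nat \<Rightarrow> nat" where
  "ru U D p = p" | "ru U U p = Suc p" | "ru D U p = Suc p" | "ru D D p = p"
fun rd :: "step \<Rightarrow> step \<Rightarrow> nat \<Rightarrow> nat" where
  "rd U D p = p" | "rd U U p = p" | "rd D U p = Suc p" | "rd D D p = Suc p"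

lemma cmp_Suc_1: "cmp (Suc N) (Suc 0) = 1"
  by (induction N) auto

lemma card_Wset: "a + b \<ge> 1 \<Longrightarrow> card (Wset x y a b p) = cmp a (ru x y p) * cmp b (rd x y p)"
proof (induction "a + b" arbitrary: a b x y p rule: less_induct)
  case less
  show ?case
  proof (cases x)
    case U
    show ?thesis
    proof (cases a)
      case 0
      then obtain b' where "b = Suc b'" using less.prems by (cases b) auto
      then show ?thesis using 0 U by (cases y; cases p) (auto simp: Wset_U0)
    next
      case (Suc a')
      show ?thesis
      proof (cases "a' + b = 0")
        case True
        then have "a' = 0" "b = 0" by auto
        then show ?thesis using Suc U by (cases y; cases p) (auto simp: Wset_U Wset_U0 Wset_D0)
      next
        case False
        have IH1: "card (Wset U y a' b p) = cmp a' (ru U y p) * cmp b (rd U y p)"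
          using less.hyps[of a' b] Suc False by auto
        have IH2: "card (Wset D y a' b (p - 1)) = cmp a' (ru D y (p - 1)) * cmp b (rd D y (p - 1))"
          using less.hyps[of a' b] Suc False by auto
        have disj: "Cons U ` Wset U y a' b p \<inter> Cons U ` Wset D y a' b q = {}" for q
          by (auto simp: Wset_def)
        have c1: "card (Cons U ` Wset U y a' b p) = card (Wset U y a' b p)"
          by (rule card_image) simp
        have c2: "card (Cons U ` Wset D y a' b (p-1)) = card (Wset D y a' b (p-1))"
          by (rule card_image) simp
        have "card (Wset U y a b p) = card (Wset U y a' b p) + (if p > 0 then card (Wset D y a' b (p - 1)) else 0)"
          using False Suc disj[of "p-1"] c1 c2
          by (auto simp: Wset_U card_Un_disjoint Wset_finite)
        also have "\<dots> = cmp a (ru U y p) * cmp b (rd U y p)"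
          unfolding IH1 IH2 using Suc False
          by (cases y; cases p; cases b; cases a') (auto simp: algebra_simps cmp_Suc_1)
        finally show ?thesis using U by simp
      qed
    qed
  next
    case D
    show ?thesis
    proof (cases b)
      case 0
      then obtain a' where "a = Suc a'" using less.prems by (cases a) auto
      then show ?thesis using 0 D by (cases y; cases p) (auto simp: Wset_D0)
    next
      case (Suc b')
      show ?thesis
      proof (cases "a + b' = 0")
        case True
        then have "a = 0" "b' = 0" by auto
        then show ?thesis using Suc D by (cases y; cases p) (auto simp: Wset_D Wset_U0 Wset_D0)
      next
        case False
        have IH1: "card (Wset D y a b' p) = cmp a (ru D y p) * cmp b' (rd D y p)"
          using less.hyps[of a b'] Suc False by auto
        have IH2: "card (Wset U y a b' p) = cmp a (ru U y p) * cmp b' (rd U y p)"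
          using less.hyps[of a b'] Suc False by auto
        have disj: "Cons D ` Wset D y a b' p \<inter> Cons D ` Wset U y a b' p = {}"
          by (auto simp: Wset_def)
        have c1: "card (Cons D ` Wset D y a b' p) = card (Wset D y a b' p)"
          by (rule card_image) simp
        have c2: "card (Cons D ` Wset U y a b' p) = card (Wset U y a b' p)"
          by (rule card_image) simp
        have "card (Wset D y a b p) = card (Wset D y a b' p) + card (Wset U y a b' p)"
          using False Suc disj c1 c2
          by (auto simp: Wset_D card_Un_disjoint Wset_finite)
        also have "\<dots> = cmp a (ru D y p) * cmp b (rd D y p)"
          unfolding IH1 IH2 using Suc
          by (cases y) (auto simp: algebra_simps)
        finally show ?thesis using D by simp
      qed
    qed
  qed
qed



definition rot :: "nat \<Rightarrow> 'a list \<Rightarrow> 'a list" where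
  "rot s w = drop s w @ take s w"

definition idx :: "nat \<Rightarrow> nat \<Rightarrow> nat \<Rightarrow> nat" where
  "idx L s i = (if s + i < L then s + i else s + i - L)"

definition prv :: "nat \<Rightarrow> nat \<Rightarrow> nat" where
  "prv L q = (if q = 0 then L - 1 else q - 1)"

lemma rot_length[simp]: "length (rot s w) = length w"
  by (simp add: rot_def)

lemma rot_count[simp]: "count_list (rot s w) x = count_list w x"
proof -
  have "count_list w x = count_list (take s w @ drop s w) x" by simp
  then show ?thesis unfolding rot_def count_list_append by simp
qed

lemma rot_0[simp]: "rot 0 w = w"
  by (simp add: rot_def)

lemma rot_inv: "s \<le> length v \<Longrightarrow> rot s (rot (length v - s) v) = v"
  by (simp add: rot_def)

lemma rot_nth: "s \<le> length w \<Longrightarrow> i < length w \<Longrightarrow> rot s w ! i = w ! idx (length w) s i"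
  by (auto simp: rot_def idx_def nth_append add.commute)

lemma rot_inj: "s \<le> length w1 \<Longrightarrow> length w1 = length w2 \<Longrightarrow> rot s w1 = rot s w2 \<Longrightarrow> w1 = w2"
  by (metis rot_def append_take_drop_id append_eq_append_conv length_drop)

lemma rot_paths: "w \<in> paths n r \<Longrightarrow> rot s w \<in> paths n r"
  by (simp add: paths_def)

lemma hd_rot: "s < length w \<Longrightarrow> hd (rot s w) = w ! s"
proof -
  assume s: "s < length w"
  then have "rot s w \<noteq> []" by (metis length_0_conv less_zeroE rot_length)
  then have "hd (rot s w) = rot s w ! 0" by (simp add: hd_conv_nth)
  also have "\<dots> = w ! s" using s rot_nth[of s w 0] by (cases w) (auto simp: idx_def)
  finally show ?thesis .
qed

lemma last_rot: "s < length w \<Longrightarrow> last (rot s w) = w ! prv (length w) s"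
proof -
  assume s: "s < length w"
  then have "rot s w \<noteq> []" by (metis length_0_conv less_zeroE rot_length)
  then have "last (rot s w) = rot s w ! (length w - 1)" by (simp add: last_conv_nth)
  also have "\<dots> = w ! idx (length w) s (length w - 1)" using s by (simp add: rot_nth)
  also have "idx (length w) s (length w - 1) = prv (length w) s" using s unfolding idx_def prv_def by auto
  finally show ?thesis .
qed

lemma count_take_rot:
  assumes "s \<le> length w" "i \<le> length w"
  shows "int (count_list (take i (rot s w)) x) =
    (if s + i \<le> length w then int (count_list (take (s+i) w) x) - int (count_list (take s w) x)
     else int (count_list (take (s+i-length w) w) x) + int (count_list w x) - int (count_list (take s w) x))"
proof (cases "s + i \<le> length w")
  case True
  have "take i (rot s w) = take i (drop s w)" using True assms by (simp add: rot_def)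
  moreover have "take (s+i) w = take s w @ take i (drop s w)" by (simp add: take_add)
  ultimately show ?thesis using True by simp
next
  case False
  have le: "s + i - length w \<le> s" using assms by arith
  have "take i (rot s w) = drop s w @ take (s + i - length w) (take s w)"
    using False assms by (simp add: rot_def add.commute)
  also have "\<dots> = drop s w @ take (s + i - length w) w" using le by (simp add: min_def)
  finally have "take i (rot s w) = drop s w @ take (s + i - length w) w" .
  moreover have "count_list w x = count_list (take s w) x + count_list (drop s w) x"
    by (metis append_take_drop_id count_list_append)
  ultimately show ?thesis using False by simp
qed

lemma ht_rot:
  assumes "s \<le> length w" "i \<le> length w"
  shows "ht r (rot s w) i =
    (if s + i \<le> length w then ht r w (s+i) - ht r w s
     else ht r w (s+i-length w) + ht r w (length w) - ht r w s)"
  using count_take_rot[OF assms, of U] count_take_rot[OF assms, of D]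
  by (auto simp: ht_def algebra_simps)



definition kv :: "nat \<Rightarrow> step list \<Rightarrow> nat \<Rightarrow> int" where
  "kv r w q = ht r w q * int (length w) - int q"

definition H :: "nat \<Rightarrow> step list \<Rightarrow> nat \<Rightarrow> nat \<Rightarrow> int" where
  "H r w s q = (if s \<le> q then ht r w q - ht r w s else ht r w q + 1 - ht r w s)"

lemma mult_gap: "(h::int) < g \<Longrightarrow> 0 \<le> L \<Longrightarrow> h * L + L \<le> g * L"
proof -
  assume "h < g" "0 \<le> L"
  then have "(h + 1) * L \<le> g * L" by (intro mult_right_mono) auto
  then show ?thesis by (simp add: algebra_simps)
qed

lemma H_low:
  assumes "q < length w" "s < length w"
  shows "H r w s q \<le> 0 \<longleftrightarrow> q = s \<or> kv r w q < kv r w s"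
proof -
  define h where "h = ht r w q"
  define g where "g = ht r w s"
  define L where "L = int (length w)"
  have qL: "int q < L" "int s < L" using assms by (auto simp: L_def)
  have L0: "0 \<le> L" by (simp add: L_def)
  have k: "kv r w q = h * L - int q" "kv r w s = g * L - int s"
    by (auto simp: kv_def h_def g_def L_def)
  have Hd: "H r w s q = (if s \<le> q then h - g else h + 1 - g)"
    by (simp add: H_def h_def g_def)
  have qs: "q = s \<Longrightarrow> h = g" by (simp add: h_def g_def)
  show ?thesis
  proof (cases "h < g")
    case True
    then have "h * L + L \<le> g * L" using mult_gap L0 by blast
    then show ?thesis unfolding k Hd using qL True by auto
  next
    case False
    show ?thesis
    proof (cases "h = g")
      case True
      then show ?thesis unfolding k Hd using qL by auto
    next
      case False2: False
      then have "g < h" using False by simp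
      then have "g * L + L \<le> h * L" using mult_gap L0 by blast
      then show ?thesis unfolding k Hd using qL \<open>g < h\<close> qs by auto
    qed
  qed
qed

lemma kv_inj: "q < length w \<Longrightarrow> s < length w \<Longrightarrow> kv r w q = kv r w s \<Longrightarrow> q = s"
proof -
  assume a: "q < length w" "s < length w" "kv r w q = kv r w s"
  define h where "h = ht r w q"
  define g where "g = ht r w s"
  define L where "L = int (length w)"
  have qL: "int q < L" "int s < L" using a by (auto simp: L_def)
  have L0: "0 \<le> L" by (simp add: L_def)
  have e: "h * L - int q = g * L - int s" using a(3) by (simp add: kv_def h_def g_def L_def)
  show "q = s"
  proof (cases "h < g")
    case True
    then have "h * L + L \<le> g * L" using mult_gap L0 by blast
    then show ?thesis using e qL by auto
  next
    case False
    show ?thesis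
    proof (cases "h = g")
      case True then show ?thesis using e by auto
    next
      case False2: False
      then have "g < h" using False by simp
      then have "g * L + L \<le> h * L" using mult_gap L0 by blast
      then show ?thesis using e qL by auto
    qed
  qed
qed

lemma ht_0[simp]: "ht r w 0 = 0"
  by (simp add: ht_def)

lemma ht_rot_idx:
  assumes "ht r w (length w) = 1" "s < length w" "j < length w"
  shows "ht r (rot s w) j = H r w s (idx (length w) s j)" "idx (length w) s j < length w"
proof -
  have e: "ht r (rot s w) j = (if s + j \<le> length w then ht r w (s+j) - ht r w s
     else ht r w (s+j-length w) + ht r w (length w) - ht r w s)"
    using ht_rot[of s w j r] assms by simp
  show "ht r (rot s w) j = H r w s (idx (length w) s j)"
  proof (cases "s + j < length w")
    case True then show ?thesis using e by (simp add: H_def idx_def)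
  next
    case False
    show ?thesis
    proof (cases "s + j = length w")
      case True
      then have "s > 0" using assms by auto
      then show ?thesis using e True assms(1) by (simp add: H_def idx_def)
    next
      case False2: False
      then have "s + j - length w < s" using assms False by auto
      then show ?thesis using e False False2 assms(1) by (simp add: H_def idx_def)
    qed
  qed
  show "idx (length w) s j < length w" using assms by (auto simp: idx_def)
qed


lemma card_rot_pair:
  assumes h1: "ht r w (length w) = 1" and s: "s < length w"
  shows "card {i. Suc i < length (rot s w) \<and> P (rot s w ! i) (rot s w ! Suc i) (ht r (rot s w) (Suc i))}
   = card {q. q < length w \<and> q \<noteq> s \<and> P (w ! prv (length w) q) (w ! q) (H r w s q)}"
proof -
  define L where "L = length w"
  define f where "f i = idx L s (Suc i)" for i
  define g where "g q = (if s < q then q - s - 1 else q + L - s - 1)" for q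
  have pt: "rot s w ! i = w ! prv L (f i) \<and> rot s w ! Suc i = w ! f i \<and> ht r (rot s w) (Suc i) = H r w s (f i)
     \<and> f i < L \<and> f i \<noteq> s \<and> g (f i) = i" if "Suc i < L" for i
  proof -
    have "rot s w ! i = w ! idx L s i" using rot_nth[of s w i] s that by (simp add: L_def)
    moreover have "idx L s i = prv L (f i)" using that s unfolding idx_def prv_def f_def L_def by auto
    moreover have "rot s w ! Suc i = w ! f i" using rot_nth[of s w "Suc i"] s that by (simp add: L_def f_def)
    moreover have "ht r (rot s w) (Suc i) = H r w s (f i)" "f i < L"
      using ht_rot_idx[OF h1 s, of "Suc i"] that by (auto simp: L_def f_def)
    moreover have "f i \<noteq> s" "g (f i) = i" using that s unfolding f_def g_def idx_def L_def by auto
    ultimately show ?thesis by simp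
  qed
  have pt2: "Suc (g q) < L \<and> f (g q) = q" if "q < L" "q \<noteq> s" for q
    using that s unfolding f_def g_def idx_def L_def by auto
  have "bij_betw f {i. Suc i < length (rot s w) \<and> P (rot s w ! i) (rot s w ! Suc i) (ht r (rot s w) (Suc i))}
     {q. q < length w \<and> q \<noteq> s \<and> P (w ! prv (length w) q) (w ! q) (H r w s q)}"
  proof (rule bij_betw_byWitness[where f'=g])
    show "\<forall>a\<in>{i. Suc i < length (rot s w) \<and> P (rot s w ! i) (rot s w ! Suc i) (ht r (rot s w) (Suc i))}. g (f a) = a"
      using pt by (auto simp: L_def)
    show "\<forall>a'\<in>{q. q < length w \<and> q \<noteq> s \<and> P (w ! prv (length w) q) (w ! q) (H r w s q)}. f (g a') = a'"
      using pt2 by (auto simp: L_def)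
    show "f ` {i. Suc i < length (rot s w) \<and> P (rot s w ! i) (rot s w ! Suc i) (ht r (rot s w) (Suc i))}
       \<subseteq> {q. q < length w \<and> q \<noteq> s \<and> P (w ! prv (length w) q) (w ! q) (H r w s q)}"
      using pt by (auto simp: L_def)
    show "g ` {q. q < length w \<and> q \<noteq> s \<and> P (w ! prv (length w) q) (w ! q) (H r w s q)}
       \<subseteq> {i. Suc i < length (rot s w) \<and> P (rot s w ! i) (rot s w ! Suc i) (ht r (rot s w) (Suc i))}"
    proof
      fix i assume "i \<in> g ` {q. q < length w \<and> q \<noteq> s \<and> P (w ! prv (length w) q) (w ! q) (H r w s q)}"
      then obtain q where q: "q < L" "q \<noteq> s" "P (w ! prv L q) (w ! q) (H r w s q)" "i = g q"
        by (auto simp: L_def)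
      then have "Suc i < L" "f i = q" using pt2 by auto
      then show "i \<in> {i. Suc i < length (rot s w) \<and> P (rot s w ! i) (rot s w ! Suc i) (ht r (rot s w) (Suc i))}"
        using pt[of i] q by (auto simp: L_def)
    qed
  qed
  then show ?thesis by (rule bij_betw_same_card)
qed

lemma card_rot_step:
  assumes h1: "ht r w (length w) = 1" and s: "s < length w"
  shows "card {i. i < length (rot s w) \<and> P (rot s w ! i) (ht r (rot s w) i)}
   = card {q. q < length w \<and> P (w ! q) (H r w s q)}"
proof -
  define L where "L = length w"
  define f where "f i = idx L s i" for i
  define g where "g q = (if s \<le> q then q - s else q + L - s)" for q
  have pt: "rot s w ! i = w ! f i \<and> ht r (rot s w) i = H r w s (f i)
     \<and> f i < L \<and> g (f i) = i" if "i < L" for i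
  proof -
    have "rot s w ! i = w ! f i" using rot_nth[of s w i] s that by (simp add: L_def f_def)
    moreover have "ht r (rot s w) i = H r w s (f i)" "f i < L"
      using ht_rot_idx[OF h1 s, of i] that by (auto simp: L_def f_def)
    moreover have "g (f i) = i" using that s unfolding f_def g_def idx_def L_def by auto
    ultimately show ?thesis by simp
  qed
  have pt2: "g q < L \<and> f (g q) = q" if "q < L" for q
    using that s unfolding f_def g_def idx_def L_def by auto
  have "bij_betw f {i. i < length (rot s w) \<and> P (rot s w ! i) (ht r (rot s w) i)}
     {q. q < length w \<and> P (w ! q) (H r w s q)}"
  proof (rule bij_betw_byWitness[where f'=g])
    show "\<forall>a\<in>{i. i < length (rot s w) \<and> P (rot s w ! i) (ht r (rot s w) i)}. g (f a) = a"
      using pt by (auto simp: L_def)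
    show "\<forall>a'\<in>{q. q < length w \<and> P (w ! q) (H r w s q)}. f (g a') = a'"
      using pt2 by (auto simp: L_def)
    show "f ` {i. i < length (rot s w) \<and> P (rot s w ! i) (ht r (rot s w) i)}
       \<subseteq> {q. q < length w \<and> P (w ! q) (H r w s q)}"
      using pt by (auto simp: L_def)
    show "g ` {q. q < length w \<and> P (w ! q) (H r w s q)}
       \<subseteq> {i. i < length (rot s w) \<and> P (rot s w ! i) (ht r (rot s w) i)}"
    proof
      fix i assume "i \<in> g ` {q. q < length w \<and> P (w ! q) (H r w s q)}"
      then obtain q where q: "q < L" "P (w ! q) (H r w s q)" "i = g q"
        by (auto simp: L_def)
      then have "i < L" "f i = q" using pt2 by auto
      then show "i \<in> {i. i < length (rot s w) \<and> P (rot s w ! i) (ht r (rot s w) i)}"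
        using pt[of i] q by (auto simp: L_def)
    qed
  qed
  then show ?thesis by (rule bij_betw_same_card)
qed



lemma rank_one:
  fixes k :: "nat \<Rightarrow> int"
  assumes fin: "finite M" and inj: "inj_on k M" and j: "j < card M"
  shows "card {s\<in>M. card {q\<in>M. k q < k s} = j} = 1"
proof -
  define rk where "rk s = card {q\<in>M. k q < k s}" for s
  have rk_lt: "rk s < card M" if "s \<in> M" for s
  proof -
    have "{q\<in>M. k q < k s} \<subseteq> M - {s}" by auto
    then have "rk s \<le> card (M - {s})" unfolding rk_def by (intro card_mono) (use fin in auto)
    also have "\<dots> < card M" using fin that by (rule card_Diff1_less)
    finally show ?thesis .
  qed
  have mono: "rk s < rk t" if "s \<in> M" "t \<in> M" "k s < k t" for s t
  proof -
    have "{q\<in>M. k q < k s} \<subset> {q\<in>M. k q < k t}" using that by auto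
    then show ?thesis unfolding rk_def by (intro psubset_card_mono) (use fin in auto)
  qed
  have injrk: "inj_on rk M"
  proof (rule inj_onI)
    fix s t assume st: "s \<in> M" "t \<in> M" "rk s = rk t"
    show "s = t"
    proof (rule ccontr)
      assume "s \<noteq> t"
      then have "k s \<noteq> k t" using inj st by (auto dest: inj_onD)
      then have "k s < k t \<or> k t < k s" by auto
      then show False using mono st by fastforce
    qed
  qed
  have img: "rk ` M = {..<card M}"
  proof (rule card_subset_eq)
    show "rk ` M \<subseteq> {..<card M}" using rk_lt by auto
    show "card (rk ` M) = card {..<card M}" using card_image[OF injrk] by simp
  qed simp
  then obtain s0 where s0: "s0 \<in> M" "rk s0 = j" using j by (metis imageE lessThan_iff)
  have "{s\<in>M. rk s = j} = {s0}" using s0 injrk by (auto dest: inj_onD)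
  then show ?thesis unfolding rk_def by simp
qed

lemma rot_len_self[simp]: "rot (length w) w = w"
  by (simp add: rot_def)

lemma equi:
  assumes fin: "finite T" and len: "\<forall>w\<in>T. length w = L"
    and clo: "\<forall>w\<in>T. \<forall>s<L. rot s w \<in> T" and sub: "S \<subseteq> T"
    and one: "\<forall>w\<in>T. card {s. s < L \<and> rot s w \<in> S} = 1"
  shows "card T = L * card S"
proof -
  define X where "X = Sigma T (\<lambda>w. {s. s < L \<and> rot s w \<in> S})"
  define Y where "Y = Sigma {..<L} (\<lambda>s. {w\<in>T. rot s w \<in> S})"
  have "card X = (\<Sum>w\<in>T. card {s. s < L \<and> rot s w \<in> S})"
    unfolding X_def by (rule card_SigmaI) (use fin in auto)
  also have "\<dots> = card T" using one by simp
  finally have cX: "card X = card T" .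
  have bij: "card {w\<in>T. rot s w \<in> S} = card S" if s: "s < L" for s
  proof -
    have "bij_betw (rot s) {w\<in>T. rot s w \<in> S} S"
    proof (rule bij_betw_byWitness[where f'="rot (L - s)"])
      show "\<forall>a\<in>{w \<in> T. rot s w \<in> S}. rot (L - s) (rot s a) = a"
      proof
        fix a assume "a \<in> {w \<in> T. rot s w \<in> S}"
        then have "length a = L" using len by auto
        then show "rot (L - s) (rot s a) = a" using rot_inv[of "L - s" a] s by simp
      qed
      show "\<forall>a'\<in>S. rot s (rot (L - s) a') = a'"
      proof
        fix a assume "a \<in> S"
        then have "length a = L" using len sub by auto
        then show "rot s (rot (L - s) a) = a" using rot_inv[of s a] s by simp
      qed
      show "rot s ` {w \<in> T. rot s w \<in> S} \<subseteq> S" by auto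
      show "rot (L - s) ` S \<subseteq> {w \<in> T. rot s w \<in> S}"
      proof
        fix v assume "v \<in> rot (L - s) ` S"
        then obtain u where u: "u \<in> S" "v = rot (L - s) u" by auto
        have uT: "u \<in> T" using u sub by auto
        have "v \<in> T"
        proof (cases "s = 0")
          case True
          have "length u = L" using uT len by auto
          then have "rot L u = u" using rot_len_self[of u] by simp
          then show ?thesis using True u uT by simp
        next
          case False then show ?thesis using u uT clo s by auto
        qed
        moreover have "rot s v = u" using u(2) uT len s rot_inv[of s u] by simp
        ultimately show "v \<in> {w \<in> T. rot s w \<in> S}" using u by auto
      qed
    qed
    then show ?thesis by (rule bij_betw_same_card)
  qed
  have "card Y = (\<Sum>s\<in>{..<L}. card {w\<in>T. rot s w \<in> S})"
    unfolding Y_def by (rule card_SigmaI) (use fin in auto)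
  also have "\<dots> = L * card S" using bij by simp
  finally have cY: "card Y = L * card S" .
  have "prod.swap ` X = Y" unfolding X_def Y_def by (rule set_eqI) (force simp: image_iff)
  moreover have "card (prod.swap ` X) = card X" by (rule card_image) (rule inj_swap)
  ultimately have "card Y = card X" by simp
  then show ?thesis using cX cY by simp
qed

lemma partition_card:
  assumes fin: "finite S" "finite J" and f: "\<forall>v\<in>S. f v \<in> J"
    and C: "\<forall>j\<in>J. card {v\<in>S. f v = j} = C"
  shows "card S = card J * C"
proof -
  have e: "S = (\<Union>j\<in>J. {v\<in>S. f v = j})" using f by auto
  have e2: "card S = card (\<Union>j\<in>J. {v\<in>S. f v = j})" using e by (rule arg_cong)
  have "card (\<Union>j\<in>J. {v\<in>S. f v = j}) = (\<Sum>j\<in>J. card {v\<in>S. f v = j})"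
    by (rule card_UN_disjoint) (use fin in auto)
  then have "card S = (\<Sum>j\<in>J. card {v\<in>S. f v = j})" using e2 by simp
  also have "\<dots> = card J * C" using C by simp
  finally show ?thesis .
qed



lemma paths_len: "w \<in> paths n r \<Longrightarrow> length w = (r+1)*n+1"
  by (simp add: paths_def)

lemma paths_ht: "w \<in> paths n r \<Longrightarrow> ht r w (length w) = 1"
  by (simp add: paths_def ht_def)

lemma paths_finite: "finite (paths n r)"
proof -
  have "paths n r \<subseteq> {w. set w \<subseteq> UNIV \<and> length w = (r+1)*n+1}" by (auto simp: paths_def)
  moreover have "finite {w::step list. set w \<subseteq> UNIV \<and> length w = (r+1)*n+1}"
    by (rule finite_lists_length_eq) simp
  ultimately show ?thesis by (rule finite_subset)
qed

definition cycM :: "step \<Rightarrow> step \<Rightarrow> step list \<Rightarrow> nat" where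
  "cycM a b w = card {q. q < length w \<and> w ! prv (length w) q = a \<and> w ! q = b}"

lemma occ_rot: "w \<in> paths n r \<Longrightarrow> s < length w \<Longrightarrow>
  occ a b (rot s w) = card {q. q < length w \<and> q \<noteq> s \<and> w ! prv (length w) q = a \<and> w ! q = b}"
  using card_rot_pair[OF paths_ht, of w n r s "\<lambda>x y h. x = a \<and> y = b"] by (simp add: occ_def)

lemma occ_low_rot: "w \<in> paths n r \<Longrightarrow> s < length w \<Longrightarrow>
  occ_low r a b (rot s w) = card {q. q < length w \<and> q \<noteq> s \<and> w ! prv (length w) q = a \<and> w ! q = b
     \<and> kv r w q < kv r w s}"
proof -
  assume w: "w \<in> paths n r" and s: "s < length w"
  have "occ_low r a b (rot s w) = card {q. q < length w \<and> q \<noteq> s \<and> w ! prv (length w) q = a \<and> w ! q = b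
     \<and> H r w s q \<le> 0}"
    using card_rot_pair[OF paths_ht[OF w] s, of "\<lambda>x y h. x = a \<and> y = b \<and> h \<le> 0"] by (simp add: occ_low_def)
  also have "\<dots> = card {q. q < length w \<and> q \<noteq> s \<and> w ! prv (length w) q = a \<and> w ! q = b
     \<and> kv r w q < kv r w s}"
    using H_low[OF _ s] by (intro arg_cong[where f=card] Collect_cong) auto
  finally show ?thesis .
qed

lemma steps_low_rot: "w \<in> paths n r \<Longrightarrow> s < length w \<Longrightarrow>
  steps_low r a (rot s w) = card {q. q < length w \<and> w ! q = a \<and> (q = s \<or> kv r w q < kv r w s)}"
proof -
  assume w: "w \<in> paths n r" and s: "s < length w"
  have "steps_low r a (rot s w) = card {q. q < length w \<and> w ! q = a \<and> H r w s q \<le> 0}"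
    using card_rot_step[OF paths_ht[OF w] s, of "\<lambda>x h. x = a \<and> h \<le> 0"] by (simp add: steps_low_def)
  also have "\<dots> = card {q. q < length w \<and> w ! q = a \<and> (q = s \<or> kv r w q < kv r w s)}"
    using H_low[OF _ s] by (intro arg_cong[where f=card] Collect_cong) auto
  finally show ?thesis .
qed

lemma cyc_rot: "w \<in> paths n r \<Longrightarrow> s < length w \<Longrightarrow>
  cycM a b w = occ a b (rot s w) + (if hd (rot s w) = b \<and> last (rot s w) = a then 1 else 0)"
proof -
  assume w: "w \<in> paths n r" and s: "s < length w"
  define A where "A = {q. q < length w \<and> q \<noteq> s \<and> w ! prv (length w) q = a \<and> w ! q = b}"
  have finA: "finite A" unfolding A_def by (rule finite_subset[of _ "{..<length w}"]) auto
  have hl: "(hd (rot s w) = b \<and> last (rot s w) = a) \<longleftrightarrow> (w ! prv (length w) s = a \<and> w ! s = b)"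
    using hd_rot[OF s] last_rot[OF s] by auto
  show ?thesis
  proof (cases "w ! prv (length w) s = a \<and> w ! s = b")
    case True
    then have "{q. q < length w \<and> w ! prv (length w) q = a \<and> w ! q = b} = insert s A"
      using s by (auto simp: A_def)
    moreover have "s \<notin> A" by (simp add: A_def)
    ultimately show ?thesis using True hl finA occ_rot[OF w s, of a b]
      by (simp add: cycM_def A_def[symmetric])
  next
    case False
    then have "{q. q < length w \<and> w ! prv (length w) q = a \<and> w ! q = b} = A"
      using s by (auto simp: A_def)
    then show ?thesis using False hl occ_rot[OF w s, of a b]
      by (simp add: cycM_def A_def[symmetric])
  qed
qed

lemma paths_ne: "w \<in> paths n r \<Longrightarrow> 0 < length w"
  by (simp add: paths_def)

lemma cyc_formula: "v \<in> paths n r \<Longrightarrow> cycM a b v = occ a b v + (if hd v = b \<and> last v = a then 1 else 0)"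
  using cyc_rot[of v n r 0 a b] paths_ne[of v n r] by simp

lemma cycM_rot: "w \<in> paths n r \<Longrightarrow> s < length w \<Longrightarrow> cycM a b (rot s w) = cycM a b w"
  using cyc_rot[of w n r s a b] cyc_formula[of "rot s w" n r a b] rot_paths[of w n r s] by simp



lemma occ_low_le: "occ_low r a b v \<le> occ a b v"
  unfolding occ_low_def occ_def
  by (rule card_mono) (auto intro: finite_subset[of _ "{..<length v}"])

lemma kv_inj_on: "inj_on (kv r w) {q. q < length w \<and> P q}"
  by (rule inj_onI) (auto intro: kv_inj)

lemma pair_part:
  assumes j: "j < c"
  shows "card {v\<in>paths n r. occ a b v = c - 1 \<and> hd v = b \<and> last v = a \<and> occ_low r a b v = j} * c
       = card {v\<in>paths n r. occ a b v = c - 1 \<and> hd v = b \<and> last v = a}"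
proof -
  define L where "L = (r+1)*n+1"
  define T where "T = {w\<in>paths n r. cycM a b w = c}"
  define Sj where "Sj i = {v\<in>paths n r. occ a b v = c - 1 \<and> hd v = b \<and> last v = a \<and> occ_low r a b v = i}" for i
  have L0: "0 < L" by (simp add: L_def)
  have key: "card T = L * card (Sj i)" if i: "i < c" for i
  proof (rule equi)
    show "finite T" unfolding T_def by (rule finite_subset[OF _ paths_finite]) auto
    show "\<forall>w\<in>T. length w = L" by (auto simp: T_def L_def paths_len)
    show "\<forall>w\<in>T. \<forall>s<L. rot s w \<in> T"
      by (auto simp: T_def L_def rot_paths cycM_rot paths_len)
    show "Sj i \<subseteq> T"
    proof
      fix v assume "v \<in> Sj i"
      then show "v \<in> T" using cyc_formula[of v n r a b] i by (auto simp: Sj_def T_def)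
    qed
    show "\<forall>w\<in>T. card {s. s < L \<and> rot s w \<in> Sj i} = 1"
    proof
      fix w assume wT: "w \<in> T"
      then have w: "w \<in> paths n r" and lw: "length w = L" by (auto simp: T_def L_def paths_len)
      define M where "M = {q. q < length w \<and> w ! prv (length w) q = a \<and> w ! q = b}"
      have cM: "card M = c" using wT by (simp add: T_def cycM_def M_def)
      have finM: "finite M" unfolding M_def by (rule finite_subset[of _ "{..<length w}"]) auto
      have eq: "{s. s < L \<and> rot s w \<in> Sj i} = {s\<in>M. card {q\<in>M. kv r w q < kv r w s} = i}"
      proof (rule set_eqI)
        fix s
        show "s \<in> {s. s < L \<and> rot s w \<in> Sj i} \<longleftrightarrow> s \<in> {s\<in>M. card {q\<in>M. kv r w q < kv r w s} = i}"
        proof (cases "s < L")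
          case False then show ?thesis using lw by (auto simp: M_def)
        next
          case True
          then have s: "s < length w" using lw by simp
          have hl: "(hd (rot s w) = b \<and> last (rot s w) = a) \<longleftrightarrow> s \<in> M"
            using hd_rot[OF s] last_rot[OF s] s by (auto simp: M_def)
          have o1: "occ a b (rot s w) = card (M - {s})"
            using occ_rot[OF w s, of a b] by (simp add: M_def set_diff_eq conj_ac)
          have o2: "occ_low r a b (rot s w) = card {q\<in>M. kv r w q < kv r w s}"
            using occ_low_rot[OF w s, of a b] by (auto simp: M_def intro!: arg_cong[where f=card])
          have "s \<in> M \<Longrightarrow> card (M - {s}) = c - 1" using cM finM by simp
          then show ?thesis using True hl o1 o2 rot_paths[OF w, of s] by (auto simp: Sj_def)
        qed
      qed
      have "inj_on (kv r w) M" unfolding M_def by (rule kv_inj_on)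
      then show "card {s. s < L \<and> rot s w \<in> Sj i} = 1" unfolding eq
        using rank_one[OF finM] i cM by simp
    qed
  qed
  have same: "card (Sj i) = card (Sj 0)" if "i < c" for i
    using key[OF that] key[of 0] that L0 by simp
  define S where "S = {v\<in>paths n r. occ a b v = c - 1 \<and> hd v = b \<and> last v = a}"
  have "card S = card {..<c} * card (Sj 0)"
  proof (rule partition_card[where f="occ_low r a b"])
    show "finite S" unfolding S_def by (rule finite_subset[OF _ paths_finite]) auto
    show "finite {..<c}" by simp
    show "\<forall>v\<in>S. occ_low r a b v \<in> {..<c}"
    proof
      fix v assume "v \<in> S"
      then have "occ a b v = c - 1" by (simp add: S_def)
      then have "occ_low r a b v < c" using occ_low_le[of r a b v] j by linarith
      then show "occ_low r a b v \<in> {..<c}" by simp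
    qed
    show "\<forall>i\<in>{..<c}. card {v \<in> S. occ_low r a b v = i} = card (Sj 0)"
    proof
      fix i assume "i \<in> {..<c}"
      then have ci: "card (Sj i) = card (Sj 0)" using same[of i] by simp
      have "{v \<in> S. occ_low r a b v = i} = Sj i" by (auto simp: S_def Sj_def)
      then show "card {v \<in> S. occ_low r a b v = i} = card (Sj 0)" using ci by simp
    qed
  qed
  then have "card S = c * card (Sj 0)" by simp
  then have "card S = c * card (Sj j)" using same[OF j] by simp
  then show ?thesis by (simp add: S_def Sj_def)
qed


lemma card_letter: "card {q. q < length w \<and> w ! q = a} = count_list w a"
proof -
  have "count_list w a = card {i. i < length w \<and> a = w ! i}"
    by (simp add: count_list_eq_length_filter length_filter_conv_card)
  also have "\<dots> = card {q. q < length w \<and> w ! q = a}" by (metis (no_types, lifting))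
  finally show ?thesis by simp
qed

lemma step_part:
  assumes ya: "y \<noteq> a" and cnt: "\<forall>w\<in>paths n r. count_list w a = m" and j: "1 \<le> j" "j \<le> m"
  shows "card {v\<in>paths n r. occ x y v = c \<and> hd v = a \<and> steps_low r a v = j} * m
       = card {v\<in>paths n r. occ x y v = c \<and> hd v = a}"
proof -
  define L where "L = (r+1)*n+1"
  define T where "T = {w\<in>paths n r. cycM x y w = c}"
  define Sj where "Sj i = {v\<in>paths n r. occ x y v = c \<and> hd v = a \<and> steps_low r a v = i}" for i
  have L0: "0 < L" by (simp add: L_def)
  have key: "card T = L * card (Sj i)" if i: "1 \<le> i" "i \<le> m" for i
  proof (rule equi)
    show "finite T" unfolding T_def by (rule finite_subset[OF _ paths_finite]) auto
    show "\<forall>w\<in>T. length w = L" by (auto simp: T_def L_def paths_len)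
    show "\<forall>w\<in>T. \<forall>s<L. rot s w \<in> T"
      by (auto simp: T_def L_def rot_paths cycM_rot paths_len)
    show "Sj i \<subseteq> T"
    proof
      fix v assume "v \<in> Sj i"
      then show "v \<in> T" using cyc_formula[of v n r x y] ya by (auto simp: Sj_def T_def)
    qed
    show "\<forall>w\<in>T. card {s. s < L \<and> rot s w \<in> Sj i} = 1"
    proof
      fix w assume wT: "w \<in> T"
      then have w: "w \<in> paths n r" and lw: "length w = L" and cw: "cycM x y w = c"
        by (auto simp: T_def L_def paths_len)
      define M where "M = {q. q < length w \<and> w ! q = a}"
      have cM: "card M = m" using cnt w card_letter[of w a] by (simp add: M_def)
      have finM: "finite M" unfolding M_def by (rule finite_subset[of _ "{..<length w}"]) auto
      have eq: "{s. s < L \<and> rot s w \<in> Sj i} = {s\<in>M. card {q\<in>M. kv r w q < kv r w s} = i - 1}"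
      proof (rule set_eqI)
        fix s
        show "s \<in> {s. s < L \<and> rot s w \<in> Sj i} \<longleftrightarrow> s \<in> {s\<in>M. card {q\<in>M. kv r w q < kv r w s} = i - 1}"
        proof (cases "s < L")
          case False then show ?thesis using lw by (auto simp: M_def)
        next
          case True
          then have s: "s < length w" using lw by simp
          have h: "hd (rot s w) = a \<longleftrightarrow> s \<in> M"
            using hd_rot[OF s] s by (auto simp: M_def)
          have o1: "s \<in> M \<Longrightarrow> occ x y (rot s w) = c"
            using cyc_rot[OF w s, of x y] cw hd_rot[OF s] ya by (auto simp: M_def)
          have e2: "{q. q < length w \<and> w ! q = a \<and> (q = s \<or> kv r w q < kv r w s)}
              = insert s {q\<in>M. kv r w q < kv r w s}" if "s \<in> M"
            using that by (auto simp: M_def)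
          have o2: "s \<in> M \<Longrightarrow> steps_low r a (rot s w) = Suc (card {q\<in>M. kv r w q < kv r w s})"
            using steps_low_rot[OF w s, of a] e2 finM by simp
          show ?thesis using True h o1 o2 rot_paths[OF w, of s] i by (auto simp: Sj_def)
        qed
      qed
      have "inj_on (kv r w) M" unfolding M_def by (rule kv_inj_on)
      then show "card {s. s < L \<and> rot s w \<in> Sj i} = 1" unfolding eq
        using rank_one[OF finM, of "kv r w" "i - 1"] i cM by simp
    qed
  qed
  have same: "card (Sj i) = card (Sj 1)" if "1 \<le> i" "i \<le> m" for i
    using key[OF that] key[of 1] that L0 by simp
  define S where "S = {v\<in>paths n r. occ x y v = c \<and> hd v = a}"
  have "card S = card {1..m} * card (Sj 1)"
  proof (rule partition_card[where f="steps_low r a"])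
    show "finite S" unfolding S_def by (rule finite_subset[OF _ paths_finite]) auto
    show "finite {1..m}" by simp
    show "\<forall>v\<in>S. steps_low r a v \<in> {1..m}"
    proof
      fix v assume "v \<in> S"
      then have v: "v \<in> paths n r" "hd v = a" by (auto simp: S_def)
      have ne: "0 < length v" using paths_ne[OF v(1)] .
      define Z where "Z = {i. i < length v \<and> v ! i = a \<and> ht r v i \<le> 0}"
      have finZ: "finite Z" unfolding Z_def by (rule finite_subset[of _ "{..<length v}"]) auto
      have "0 \<in> Z" using ne v(2) by (auto simp: Z_def hd_conv_nth)
      then have "1 \<le> card Z" using finZ by (metis One_nat_def Suc_leI card_gt_0_iff empty_iff)
      moreover have "card Z \<le> card {q. q < length v \<and> v ! q = a}"
        unfolding Z_def by (rule card_mono) (auto intro: finite_subset[of _ "{..<length v}"])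
      ultimately show "steps_low r a v \<in> {1..m}"
        using card_letter[of v a] cnt v(1) by (simp add: steps_low_def Z_def)
    qed
    show "\<forall>i\<in>{1..m}. card {v \<in> S. steps_low r a v = i} = card (Sj 1)"
    proof
      fix i assume "i \<in> {1..m}"
      then have ci: "card (Sj i) = card (Sj 1)" using same[of i] by simp
      have "{v \<in> S. steps_low r a v = i} = Sj i" by (auto simp: S_def Sj_def)
      then show "card {v \<in> S. steps_low r a v = i} = card (Sj 1)" using ci by simp
    qed
  qed
  then have "card S = m * card (Sj 1)" by simp
  then have "card S = m * card (Sj j)" using same[OF j] by simp
  then show ?thesis by (simp add: S_def Sj_def)
qed



lemma memW: "v \<in> Wset x y (Suc (r*n)) n p \<longleftrightarrow> v \<in> paths n r \<and> hd v = x \<and> last v = y \<and> occ U D v = p"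
proof
  assume "v \<in> Wset x y (Suc (r*n)) n p"
  then show "v \<in> paths n r \<and> hd v = x \<and> last v = y \<and> occ U D v = p"
    using len_counts[of v] by (auto simp: Wset_def paths_def)
next
  assume "v \<in> paths n r \<and> hd v = x \<and> last v = y \<and> occ U D v = p"
  then show "v \<in> Wset x y (Suc (r*n)) n p"
    by (auto simp: Wset_def paths_def)
qed

lemma cardW: "card (Wset x y (Suc (r*n)) n p) = cmp (r*n+1) (ru x y p) * cmp n (rd x y p)"
  using card_Wset[of "Suc (r*n)" n x y p] by simp

lemma neqU: "(x \<noteq> U) = (x = D)" by (cases x) auto
lemma neqD: "(x \<noteq> D) = (x = U)" by (cases x) auto

lemma paths_cnt: "v \<in> paths n r \<Longrightarrow> count_list v U = r*n+1 \<and> count_list v D = n \<and> v \<noteq> []"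
  by (auto simp: paths_def)

lemma S1: "n \<ge> 1 \<Longrightarrow> k \<ge> 1 \<Longrightarrow> card {w \<in> paths n r. occ U D w = k - 1 \<and> hd w = D \<and> last w = U}
   = (r*n choose (k-1)) * ((n-1) choose (k-1))"
proof -
  assume n: "n \<ge> 1" and k: "k \<ge> 1"
  have "{w \<in> paths n r. occ U D w = k - 1 \<and> hd w = D \<and> last w = U} = Wset D U (r*n+1) n (k-1)"
    by (auto simp: memW)
  moreover have "cmp (r*n+1) (Suc (k-1)) = r*n choose (k-1)" using comp_choose by simp
  moreover have "cmp n (Suc (k-1)) = (n-1) choose (k-1)" using comp_choose[of "n-1"] n by simp
  ultimately show ?thesis using cardW[of D U r n "k-1"] by simp
qed

lemma S2: "n \<ge> 1 \<Longrightarrow> k \<ge> 1 \<Longrightarrow> card {w \<in> paths n r. occ D U w = k - 1 \<and> hd w = U \<and> last w = D}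
   = (r*n choose (k-1)) * ((n-1) choose (k-1))"
proof -
  assume n: "n \<ge> 1" and k: "k \<ge> 1"
  have "{w \<in> paths n r. occ D U w = k - 1 \<and> hd w = U \<and> last w = D} = Wset U D (r*n+1) n k"
  proof (rule set_eqI)
    fix w
    show "w \<in> {w \<in> paths n r. occ D U w = k - 1 \<and> hd w = U \<and> last w = D} \<longleftrightarrow> w \<in> Wset U D (r*n+1) n k"
    proof (cases "w \<in> paths n r \<and> hd w = U \<and> last w = D")
      case True
      then have "occ U D w = occ D U w + 1" using UD_DU[of w] paths_cnt[of w n r] by simp
      then show ?thesis using True k by (auto simp: memW)
    next
      case False then show ?thesis by (auto simp: memW)
    qed
  qed
  moreover have "card (Wset U D (r*n+1) n k) = (r*n choose (k-1)) * ((n-1) choose (k-1))"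
  proof -
    obtain k' where k': "k = Suc k'" using k by (cases k) auto
    have "cmp (Suc (r*n)) k = r*n choose (k-1)" using comp_choose[of "r*n" k'] k' by simp
    moreover have "cmp n k = (n-1) choose (k-1)" using comp_choose[of "n-1" k'] k' n by simp
    ultimately show ?thesis using cardW[of U D r n k] by simp
  qed
  ultimately show ?thesis by simp
qed

lemma S3: "n \<ge> 1 \<Longrightarrow> k \<ge> 1 \<Longrightarrow> k \<le> r*n \<Longrightarrow> card {w \<in> paths n r. occ U U w = r*n - k \<and> hd w = U \<and> last w = U}
   = (r*n choose k) * ((n-1) choose (k-1))"
proof -
  assume n: "n \<ge> 1" and k: "k \<ge> 1" and kr: "k \<le> r*n"
  have "{w \<in> paths n r. occ U U w = r*n - k \<and> hd w = U \<and> last w = U} = Wset U U (r*n+1) n k"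
  proof (rule set_eqI)
    fix w
    show "w \<in> {w \<in> paths n r. occ U U w = r*n - k \<and> hd w = U \<and> last w = U} \<longleftrightarrow> w \<in> Wset U U (r*n+1) n k"
    proof (cases "w \<in> paths n r \<and> hd w = U \<and> last w = U")
      case True
      then have "occ U U w + occ U D w = r*n" using I1[of w] paths_cnt[of w n r] by simp
      then show ?thesis using True kr by (auto simp: memW)
    next
      case False then show ?thesis by (auto simp: memW)
    qed
  qed
  moreover have "cmp (r*n+1) (Suc k) = r*n choose k" using comp_choose by simp
  moreover have "cmp n k = (n-1) choose (k-1)" using comp_choose[of "n-1" "k-1"] n k by simp
  ultimately show ?thesis using cardW[of U U r n k] by simp
qed

lemma S4: "n \<ge> 1 \<Longrightarrow> k \<ge> 1 \<Longrightarrow> k + 1 \<le> n \<Longrightarrow> card {w \<in> paths n r. occ D D w = n - k - 1 \<and> hd w = D \<and> last w = D}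
   = (r*n choose (k-1)) * ((n-1) choose k)"
proof -
  assume n: "n \<ge> 1" and k: "k \<ge> 1" and kn: "k + 1 \<le> n"
  have "{w \<in> paths n r. occ D D w = n - k - 1 \<and> hd w = D \<and> last w = D} = Wset D D (r*n+1) n k"
  proof (rule set_eqI)
    fix w
    show "w \<in> {w \<in> paths n r. occ D D w = n - k - 1 \<and> hd w = D \<and> last w = D} \<longleftrightarrow> w \<in> Wset D D (r*n+1) n k"
    proof (cases "w \<in> paths n r \<and> hd w = D \<and> last w = D")
      case True
      then have "occ D U w + occ D D w + 1 = n" "occ U D w = occ D U w"
        using I2[of w] UD_DU[of w] paths_cnt[of w n r] by simp_all
      then show ?thesis using True kn by (auto simp: memW)
    next
      case False then show ?thesis by (auto simp: memW)
    qed
  qed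
  moreover have "cmp (r*n+1) k = r*n choose (k-1)" using comp_choose[of "r*n" "k-1"] k by simp
  moreover have "cmp n (Suc k) = (n-1) choose k" using comp_choose[of "n-1" k] n by simp
  ultimately show ?thesis using cardW[of D D r n k] by simp
qed

lemma S5: "n \<ge> 1 \<Longrightarrow> k \<ge> 1 \<Longrightarrow> card {w \<in> paths n r. occ U D w = k \<and> hd w = U}
   = ((r*n+1) choose k) * ((n-1) choose (k-1))"
proof -
  assume n: "n \<ge> 1" and k: "k \<ge> 1"
  have lst: "last w = U \<or> last w = D" for w by (cases "last w") auto
  have "{w \<in> paths n r. occ U D w = k \<and> hd w = U} = Wset U D (r*n+1) n k \<union> Wset U U (r*n+1) n k"
    by (auto simp: memW neqU)
  moreover have "Wset U D (r*n+1) n k \<inter> Wset U U (r*n+1) n k = {}" by (auto simp: Wset_def)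
  ultimately have "card {w \<in> paths n r. occ U D w = k \<and> hd w = U} = card (Wset U D (r*n+1) n k) + card (Wset U U (r*n+1) n k)"
    by (simp add: card_Un_disjoint Wset_finite)
  also have "\<dots> = cmp (r*n+1) k * cmp n k + cmp (r*n+1) (Suc k) * cmp n k" by (simp add: cardW del: cmp.simps)
  also have "\<dots> = (((r*n) choose (k-1)) + ((r*n) choose k)) * ((n-1) choose (k-1))"
    using comp_choose[of "r*n" "k-1"] comp_choose[of "r*n" k] comp_choose[of "n-1" "k-1"] n k
    by (simp add: algebra_simps)
  also have "((r*n) choose (k-1)) + ((r*n) choose k) = (r*n+1) choose k"
    using k by (cases k) simp_all
  finally show ?thesis .
qed

lemma S6: "n \<ge> 1 \<Longrightarrow> k \<ge> 1 \<Longrightarrow> card {w \<in> paths n r. occ D U w = k \<and> hd w = D}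
   = (r*n choose (k-1)) * (n choose k)"
proof -
  assume n: "n \<ge> 1" and k: "k \<ge> 1"
  have lst: "last w = U \<or> last w = D" for w by (cases "last w") auto
  have "{w \<in> paths n r. occ D U w = k \<and> hd w = D} = Wset D U (r*n+1) n (k-1) \<union> Wset D D (r*n+1) n k"
  proof (rule set_eqI)
    fix w
    show "w \<in> {w \<in> paths n r. occ D U w = k \<and> hd w = D} \<longleftrightarrow> w \<in> Wset D U (r*n+1) n (k-1) \<union> Wset D D (r*n+1) n k"
    proof (cases "w \<in> paths n r \<and> hd w = D")
      case True
      then have "occ U D w + (if last w = U then 1 else 0) = occ D U w"
        using UD_DU[of w] paths_cnt[of w n r] by simp
      then show ?thesis using True k lst[of w] by (auto simp: memW)
    next
      case False then show ?thesis by (auto simp: memW)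
    qed
  qed
  moreover have "Wset D U (r*n+1) n (k-1) \<inter> Wset D D (r*n+1) n k = {}" by (auto simp: Wset_def)
  ultimately have "card {w \<in> paths n r. occ D U w = k \<and> hd w = D} = card (Wset D U (r*n+1) n (k-1)) + card (Wset D D (r*n+1) n k)"
    by (simp add: card_Un_disjoint Wset_finite)
  also have "\<dots> = cmp (r*n+1) (Suc (k-1)) * cmp n (Suc (k-1)) + cmp (r*n+1) k * cmp n (Suc k)" by (simp add: cardW del: cmp.simps)
  also have "\<dots> = ((r*n) choose (k-1)) * (((n-1) choose (k-1)) + ((n-1) choose k))"
    using comp_choose[of "r*n" "k-1"] comp_choose[of "n-1" k] comp_choose[of "n-1" "k-1"] n k
    by (simp add: algebra_simps)
  also have "((n-1) choose (k-1)) + ((n-1) choose k) = n choose k"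
    using k n by (cases k; cases n) simp_all
  finally show ?thesis .
qed



lemma realdiv: "a * c = x * y \<Longrightarrow> 0 < c \<Longrightarrow> real a = 1 / real c * real x * real y"
proof -
  assume e: "a * c = x * y" and c: "0 < c"
  have "real a * real c = real x * real y" using e by (metis of_nat_mult)
  then show ?thesis using c by (simp add: field_simps)
qed

theorem theorem15:
  fixes r n k :: nat
  assumes "r \<ge> 1" "n \<ge> 1" "k \<ge> 1"
  shows
   "(\<forall>j. j \<le> k - 1 \<longrightarrow>
      real (card {w \<in> paths n r. occ U D w = k - 1 \<and> hd w = D \<and> last w = U \<and> occ_low r U D w = j})
      = 1 / real k * real (r*n choose (k-1)) * real ((n-1) choose (k-1)))
  \<and> (\<forall>j. j \<le> k - 1 \<longrightarrow>
      real (card {w \<in> paths n r. occ D U w = k - 1 \<and> hd w = U \<and> last w = D \<and> occ_low r D U w = j})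
      = 1 / real k * real (r*n choose (k-1)) * real ((n-1) choose (k-1)))
  \<and> (\<forall>j. j + k \<le> r*n \<longrightarrow>
      real (card {w \<in> paths n r. occ U U w = r*n - k \<and> hd w = U \<and> last w = U \<and> occ_low r U U w = j})
      = 1 / real (r*n - k + 1) * real (r*n choose k) * real ((n-1) choose (k-1)))
  \<and> (\<forall>j. j + k + 1 \<le> n \<longrightarrow>
      real (card {w \<in> paths n r. occ D D w = n - k - 1 \<and> hd w = D \<and> last w = D \<and> occ_low r D D w = j})
      = 1 / real (n - k) * real (r*n choose (k-1)) * real ((n-1) choose k))
  \<and> (\<forall>j. 1 \<le> j \<and> j \<le> r*n + 1 \<longrightarrow>
      real (card {w \<in> paths n r. occ U D w = k \<and> hd w = U \<and> steps_low r U w = j})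
      = 1 / real (r*n + 1) * real ((r*n+1) choose k) * real ((n-1) choose (k-1)))
  \<and> (\<forall>j. 1 \<le> j \<and> j \<le> n \<longrightarrow>
      real (card {w \<in> paths n r. occ D U w = k \<and> hd w = D \<and> steps_low r D w = j})
      = 1 / real n * real (r*n choose (k-1)) * real (n choose k))"
proof (intro conjI allI impI)
  have n: "n \<ge> 1" and k: "k \<ge> 1" using assms by auto
  fix j
  {
    assume j: "j \<le> k - 1"
    then have "j < k" using k by simp
    from pair_part[OF this, of n r U D] S1[OF n k]
    show "real (card {w \<in> paths n r. occ U D w = k - 1 \<and> hd w = D \<and> last w = U \<and> occ_low r U D w = j})
      = 1 / real k * real (r*n choose (k-1)) * real ((n-1) choose (k-1))"
      using k by (intro realdiv) simp_all
  next
    assume j: "j \<le> k - 1"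
    then have "j < k" using k by simp
    from pair_part[OF this, of n r D U] S2[OF n k]
    show "real (card {w \<in> paths n r. occ D U w = k - 1 \<and> hd w = U \<and> last w = D \<and> occ_low r D U w = j})
      = 1 / real k * real (r*n choose (k-1)) * real ((n-1) choose (k-1))"
      using k by (intro realdiv) simp_all
  next
    assume j: "j + k \<le> r*n"
    then have jc: "j < r*n - k + 1" and kr: "k \<le> r*n" by auto
    have e: "r * n - k + 1 - 1 = r * n - k" by simp
    from pair_part[OF jc, of n r U U] S3[OF n k kr]
    show "real (card {w \<in> paths n r. occ U U w = r*n - k \<and> hd w = U \<and> last w = U \<and> occ_low r U U w = j})
      = 1 / real (r*n - k + 1) * real (r*n choose k) * real ((n-1) choose (k-1))"
      unfolding e by (intro realdiv) simp_all
  next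
    assume j: "j + k + 1 \<le> n"
    then have jc: "j < n - k" and kn: "k + 1 \<le> n" by auto
    from pair_part[OF jc, of n r D D] S4[OF n k kn]
    show "real (card {w \<in> paths n r. occ D D w = n - k - 1 \<and> hd w = D \<and> last w = D \<and> occ_low r D D w = j})
      = 1 / real (n - k) * real (r*n choose (k-1)) * real ((n-1) choose k)"
      using jc by (intro realdiv) simp_all
  next
    assume j: "1 \<le> j \<and> j \<le> r*n + 1"
    have cnt: "\<forall>w\<in>paths n r. count_list w U = r*n+1" by (simp add: paths_def)
    from step_part[where y=D and a=U and x=U and c=k, OF _ cnt, of j] j S5[OF n k]
    show "real (card {w \<in> paths n r. occ U D w = k \<and> hd w = U \<and> steps_low r U w = j})
      = 1 / real (r*n + 1) * real ((r*n+1) choose k) * real ((n-1) choose (k-1))"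
      by (intro realdiv) simp_all
  next
    assume j: "1 \<le> j \<and> j \<le> n"
    have cnt: "\<forall>w\<in>paths n r. count_list w D = n" by (simp add: paths_def)
    from step_part[where y=U and a=D and x=D and c=k, OF _ cnt, of j] j S6[OF n k] n
    show "real (card {w \<in> paths n r. occ D U w = k \<and> hd w = D \<and> steps_low r D w = j})
      = 1 / real n * real (r*n choose (k-1)) * real (n choose k)"
      by (intro realdiv) simp_all
  }
qed


end
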